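(* Let the Algorithm and assumptions (A1)–(A4) be as in the context, with constants $L_H,K_H,\delta_g,\delta_H,\nu$, and assume $\sigma_0\le2\gamma L_H$. Suppose the algorithm does not terminate at the $N$-th iteration and that for every iteration $k$, $\delta_g\le\frac{9\delta_H^2}{4\sigma_k}$ and \[ \delta_H\le\min\Big\{\min\{\tfrac1{18},\tfrac{1-\rho_{TH}}{9}\}\big(\sqrt{K_H^2+4\sigma_k\varepsilon_g}-K_H\big),\ \min\{\tfrac19,\tfrac{2(1-\rho_{TH})}{9}\}\nu\varepsilon_H\Big\}. \] Assume $f$ attains its minimum $f_{\min}$ over $\mathcal M$. Let $\mathcal N_{succ}$ be the set of successful iterations (those $k$ with $\rho_k\ge\rho_{TH}$) performed before termination. Then \[ |\mathcal N_{succ}|\le\frac{f(x_0)-f_{\min}}{\rho_{TH}\kappa_\sigma}\max\{\varepsilon_g^{-2},\varepsilon_H^{-3}\}+1, \qquad \kappa_\sigma:=\min\Big\{\frac{\nu^3}{24\gamma^2L_H^2},\ \frac1{2\sqrt3}\min\Big\{\frac1{K_H},\frac1{\sqrt{2\gamma L_H}}\Big\}\Big\}. \]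
   Context: Let $\mathcal M$ be a connected complete Riemannian manifold; $\langle\cdot,\cdot\rangle$ and $\|\cdot\|$ denote the inner product and norm on tangent spaces $T_x\mathcal M$. Let $f=\frac1n\sum_{i=1}^n f_i$ with each $f_i:\mathcal M\to\mathbb R$ twice continuously differentiable; $\mathrm{grad} f$ is the Riemannian gradient. A retraction is a smooth map $R:T\mathcal M\to\mathcal M$ whose restriction $R_x$ to $T_x\mathcal M$ satisfies $R_x(0_x)=x$, $DR_x(0_x)=\mathrm{Id}$. $\nabla^2 f\circ R_x(0_x)$ is the Hessian at $0_x$ of $f\circ R_x$ on the inner-product space $T_x\mathcal M$. $\lambda_{\min}(H)$ denotes the smallest eigenvalue of a self-adjoint operator $H$. Algorithm: fix $\varepsilon_g,\varepsilon_H,\rho_{TH}\in(0,1)$, $\gamma>1$, $x_0\in\mathcal M$, $\sigma_0>0$. At iteration $k$: construct $G_k\in T_{x_k}\mathcal M$ and self-adjoint linear $H_k$ on $T_{x_k}\mathcal M$; if $\|G_k\|\le\varepsilon_g$ and $\lambda_{\min}(H_k)\ge-\varepsilon_H$, stop; otherwise choose $\eta_k\in T_{x_k}\mathcal M$ approximately minimizing $m_k(\eta):=\langle G_k,\eta\rangle+\frac12\langle H_k[\eta],\eta\rangle+\frac13\sigma_k\|\eta\|^3$, set $\rho_k=\frac{f(x_k)-f\circ R_{x_k}(\eta_k)}{-m_k(\eta_k)}$; if $\rho_k\ge\rho_{TH}$ (successful iteration) set $x_{k+1}=R_{x_k}(\eta_k)$, $\sigma_{k+1}=\sigma_k/\gamma$,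 else (unsuccessful) $x_{k+1}=x_k$, $\sigma_{k+1}=\gamma\sigma_k$. Cauchy point and eigenpoint: $\eta_k^C:=-\alpha^C G_k$ with $\alpha^C\in\arg\min_{\alpha\ge0}m_k(-\alpha G_k)$. Fix $\nu\in(0,1)$. When $\lambda_{\min}(H_k)<0$, $\eta_k^E:=\alpha^E u_k$ where $u_k$ satisfies $\langle u_k,H_k[u_k]\rangle\le\nu\lambda_{\min}(H_k)\|u_k\|^2<0$ and $\langle G_k,u_k\rangle\le0$, and $\alpha^E\in\arg\min_{\alpha\ge0}m_k(\alpha u_k)$. Assumptions: (A1) there is $L_H>0$ with $\big|f\circ R_{x_k}(\eta_k)-f(x_k)-\langle\mathrm{grad} f(x_k),\eta_k\rangle-\frac12\langle\nabla^2 f\circ R_{x_k}(0_{x_k})[\eta_k],\eta_k\rangle\big|\le\frac12L_H\|\eta_k\|^3$ for all $k$. (A2) there is $K_H>0$ with $\|H_k\|:=\sup_{\|\eta\|\le1}\langle\eta,H_k[\eta]\rangle\le K_H$ for all $k$. (A3) there are $\delta_g,\delta_H\in(0,1)$ with $\|G_k-\mathrm{grad} f(x_k)\|\le\delta_g$ and $\|(H_k-\nabla^2 f\circ R_{x_k}(0_{x_k}))[\eta_k]\|\le\delta_H\|\eta_k\|$ for all $k$. (A4) for all $k$, $-m_k(\eta_k)\ge-m_k(\eta_k^C)$, and $-m_k(\eta_k)\ge-m_k(\eta_k^E)$ whenever $\lambda_{\min}(H_k)<0$. *)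

theory Defs
  imports "HOL-Analysis.Analysis"
begin

text \<open>Tangent spaces are modelled (via a pointwise orthonormal frame) by a fixed
Euclidean space 'v; the retraction is R :: 'm \<Rightarrow> 'v \<Rightarrow> 'm.\<close>

definition grad_at :: "('v::euclidean_space \<Rightarrow> real) \<Rightarrow> 'v \<Rightarrow> 'v" where
  "grad_at phi v = (THE g. (phi has_derivative (\<lambda>h. g \<bullet> h)) (at v))"

definition hess_at :: "('v::euclidean_space \<Rightarrow> real) \<Rightarrow> 'v \<Rightarrow> ('v \<Rightarrow> 'v)" where
  "hess_at phi v = (THE H. (grad_at phi has_derivative H) (at v))"

text \<open>Riemannian gradient grad f(x) (= gradient of f o R_x at 0_x since DR_x(0_x) = Id)
and Hessian of f o R_x at 0_x.\<close>

definition rgrad :: "('m \<Rightarrow> real) \<Rightarrow> ('m \<Rightarrow> 'v::euclidean_space \<Rightarrow> 'm) \<Rightarrow> 'm \<Rightarrow> 'v" where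
  "rgrad f R x = grad_at (\<lambda>v. f (R x v)) 0"

definition rhess :: "('m \<Rightarrow> real) \<Rightarrow> ('m \<Rightarrow> 'v::euclidean_space \<Rightarrow> 'm) \<Rightarrow> 'm \<Rightarrow> ('v \<Rightarrow> 'v)" where
  "rhess f R x = hess_at (\<lambda>v. f (R x v)) 0"

definition self_adjoint :: "('v::euclidean_space \<Rightarrow> 'v) \<Rightarrow> bool" where
  "self_adjoint H \<longleftrightarrow> linear H \<and> (\<forall>u w. H u \<bullet> w = u \<bullet> H w)"

definition lambda_min :: "('v::euclidean_space \<Rightarrow> 'v) \<Rightarrow> real" where
  "lambda_min H = Min {l. \<exists>u. u \<noteq> 0 \<and> H u = l *\<^sub>R u}"

definition cmodel :: "'v::euclidean_space \<Rightarrow> ('v \<Rightarrow> 'v) \<Rightarrow> real \<Rightarrow> 'v \<Rightarrow> real" where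
  "cmodel G H s eta = G \<bullet> eta + 1/2 * (H eta \<bullet> eta) + 1/3 * s * norm eta ^ 3"

end

theory Submission
  imports Defs
begin

lemma cubic_min:
  fixes c1 c2 c3 :: real assumes c3: "c3 > 0"
  shows "\<exists>a\<ge>0. \<forall>b\<ge>0. c1*a + c2*a^2 + c3*a^3 \<le> c1*b + c2*b^2 + c3*b^3"
proof -
  define p where "p = (\<lambda>b::real. c1*b + c2*b^2 + c3*b^3)"
  define T where "T = 1 + (\<bar>c1\<bar> + \<bar>c2\<bar>)/c3"
  have T1: "T \<ge> 1" using c3 by (simp add: T_def)
  have "continuous_on {0..T} p" unfolding p_def by (intro continuous_intros)
  then obtain a where a: "a \<in> {0..T}" "\<forall>y\<in>{0..T}. p a \<le> p y"
    using continuous_attains_inf[of "{0..T}" p] T1 by auto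
  have big: "p b > 0" if b: "b > T" for b
  proof -
    have b1: "b \<ge> 1" using b T1 by simp
    have "(\<bar>c1\<bar> + \<bar>c2\<bar>) < c3 * b" using b c3 unfolding T_def by (simp add: field_simps)
    hence "(\<bar>c1\<bar> + \<bar>c2\<bar>) * b^2 < c3 * b * b^2" using b1 by (intro mult_strict_right_mono) auto
    moreover have "\<bar>c1\<bar> * b \<le> \<bar>c1\<bar> * b^2" using b1 by (intro mult_left_mono) (auto simp: power2_eq_square)
    moreover have "(- c1) * b \<le> \<bar>c1\<bar> * b" using b1 by (intro mult_right_mono) auto
    moreover have "(- c2) * b^2 \<le> \<bar>c2\<bar> * b^2" by (intro mult_right_mono) auto
    ultimately show ?thesis unfolding p_def by (simp add: power3_eq_cube power2_eq_square algebra_simps)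
  qed
  have "\<forall>b\<ge>0. p a \<le> p b"
  proof (intro allI impI)
    fix b :: real assume "b \<ge> 0"
    show "p a \<le> p b"
    proof (cases "b \<le> T")
      case True thus ?thesis using a \<open>b\<ge>0\<close> by auto
    next
      case False
      have "p a \<le> p 0" using a T1 by auto
      also have "p 0 = 0" by (simp add: p_def)
      finally show ?thesis using big[of b] False by linarith
    qed
  qed
  thus ?thesis using a unfolding p_def by auto
qed

lemma cmodel_scale:
  assumes "linear H"
  shows "cmodel G H s (b *\<^sub>R v) = b * (G \<bullet> v) + b^2/2 * (H v \<bullet> v) + s/3 * \<bar>b\<bar>^3 * norm v ^ 3"
  unfolding cmodel_def using linear_cmul[OF assms]
  by (simp add: power2_eq_square power_mult_distrib)

lemma cauchy_bound:
  fixes G :: "'v::euclidean_space"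
  assumes lin: "linear H" and K: "\<forall>v. norm v \<le> 1 \<longrightarrow> v \<bullet> H v \<le> K" and s: "s > 0" and G: "G \<noteq> 0"
   and A: "\<forall>a\<ge>0. (\<forall>b\<ge>0. cmodel G H s (-(a*\<^sub>R G)) \<le> cmodel G H s (-(b*\<^sub>R G)))
        \<longrightarrow> - cmodel G H s eta \<ge> - cmodel G H s (-(a*\<^sub>R G))"
  shows "\<forall>t\<ge>0. - cmodel G H s eta \<ge> t * norm G - t^2/2 * K - s/3 * t^3"
proof -
  have eq: "cmodel G H s (-(b*\<^sub>R G)) = (-(norm G^2)) * b + ((H G \<bullet> G)/2) * b^2 + (s/3 * norm G^3) * b^3"
    if "b \<ge> 0" for b
  proof -
    have "-(b*\<^sub>R G) = (-b) *\<^sub>R G" by simp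
    thus ?thesis using cmodel_scale[OF lin, of G s "-b" G] that
      by (simp add: power2_norm_eq_inner inner_commute algebra_simps)
  qed
  have "s/3 * norm G^3 > 0" using s G by simp
  from cubic_min[OF this, of "-(norm G^2)" "(H G \<bullet> G)/2"] obtain a where
    a: "a \<ge> 0" "\<forall>b\<ge>0. (-(norm G^2)) * a + ((H G \<bullet> G)/2) * a^2 + (s/3 * norm G^3) * a^3
        \<le> (-(norm G^2)) * b + ((H G \<bullet> G)/2) * b^2 + (s/3 * norm G^3) * b^3" by blast
  have amin: "\<forall>b\<ge>0. cmodel G H s (-(a*\<^sub>R G)) \<le> cmodel G H s (-(b*\<^sub>R G))"
    using a eq by simp
  have D: "- cmodel G H s eta \<ge> - cmodel G H s (-(b*\<^sub>R G))" if "b \<ge> 0" for b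
    using A a amin that by force
  define g where "g = norm G"
  have g: "g > 0" using G by (simp add: g_def)
  have HK: "H G \<bullet> G \<le> K * g^2"
  proof -
    have "norm ((1/g) *\<^sub>R G) \<le> 1" using g by (simp add: g_def)
    hence "((1/g) *\<^sub>R G) \<bullet> H ((1/g) *\<^sub>R G) \<le> K" using K by blast
    hence "(1/g)^2 * (H G \<bullet> G) \<le> K" using linear_cmul[OF lin]
      by (simp add: inner_commute power2_eq_square)
    hence "(1/g)^2 * (H G \<bullet> G) * g^2 \<le> K * g^2" using g by (simp add: mult_right_mono)
    thus ?thesis using g by (simp add: field_simps)
  qed
  show ?thesis
  proof (intro allI impI)
    fix t :: real assume t: "t \<ge> 0"
    define b where "b = t / g"
    have b: "b \<ge> 0" using t g by (simp add: b_def)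
    have "- cmodel G H s (-(b*\<^sub>R G)) = g^2 * b - ((H G \<bullet> G)/2) * b^2 - (s/3 * g^3) * b^3"
      using eq[OF b] by (simp add: g_def)
    also have "g^2 * b = t * g" using g by (simp add: b_def power2_eq_square)
    also have "(s/3 * g^3) * b^3 = s/3 * t^3" using g by (simp add: b_def power_divide)
    finally have e: "- cmodel G H s (-(b*\<^sub>R G)) = t * g - ((H G \<bullet> G)/2) * b^2 - s/3 * t^3" .
    have "((H G \<bullet> G)/2) * b^2 \<le> (K * g^2 / 2) * b^2" using HK by (intro mult_right_mono) auto
    also have "(K * g^2 / 2) * b^2 = t^2/2 * K" using g by (simp add: b_def power_divide)
    finally show "- cmodel G H s eta \<ge> t * norm G - t^2/2 * K - s/3 * t^3"
      using D[OF b] e by (simp add: g_def)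
  qed
qed

lemma eigen_bound:
  fixes G :: "'v::euclidean_space"
  assumes lin: "linear H" and s: "s > 0" and u: "u \<noteq> 0" and Gu: "G \<bullet> u \<le> 0"
   and A: "\<forall>a\<ge>0. (\<forall>b\<ge>0. cmodel G H s (a*\<^sub>R u) \<le> cmodel G H s (b*\<^sub>R u))
        \<longrightarrow> - cmodel G H s eta \<ge> - cmodel G H s (a*\<^sub>R u)"
  shows "\<forall>b\<ge>0. - cmodel G H s eta \<ge> b^2/2 * (-(H u \<bullet> u)) - s/3 * b^3 * norm u^3"
proof -
  have eq: "cmodel G H s (b*\<^sub>R u) = (G \<bullet> u) * b + ((H u \<bullet> u)/2) * b^2 + (s/3 * norm u^3) * b^3"
    if "b \<ge> 0" for b
    using cmodel_scale[OF lin, of G s b u] that by (simp add: algebra_simps)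
  have "s/3 * norm u^3 > 0" using s u by simp
  from cubic_min[OF this, of "G \<bullet> u" "(H u \<bullet> u)/2"] obtain a where
    a: "a \<ge> 0" "\<forall>b\<ge>0. (G \<bullet> u) * a + ((H u \<bullet> u)/2) * a^2 + (s/3 * norm u^3) * a^3
        \<le> (G \<bullet> u) * b + ((H u \<bullet> u)/2) * b^2 + (s/3 * norm u^3) * b^3" by blast
  have amin: "\<forall>b\<ge>0. cmodel G H s (a*\<^sub>R u) \<le> cmodel G H s (b*\<^sub>R u)"
    using a eq by simp
  show ?thesis
  proof (intro allI impI)
    fix b :: real assume b: "b \<ge> 0"
    have "- cmodel G H s eta \<ge> - cmodel G H s (b*\<^sub>R u)" using A a amin b by force
    moreover have "(G \<bullet> u) * b \<le> 0" using Gu b by (simp add: mult_nonpos_nonneg)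
    ultimately show "- cmodel G H s eta \<ge> b^2/2 * (-(H u \<bullet> u)) - s/3 * b^3 * norm u^3"
      using eq[OF b] by (simp add: algebra_simps)
  qed
qed


lemma grad_count:
  fixes D g K s S eps :: real
  assumes D: "\<forall>t\<ge>0. D \<ge> t*g - t^2/2*K - s/3*t^3"
    and e: "eps < g" "0 < eps" "eps < 1" and K: "K > 0" and s: "0 < s" "s \<le> S"
  shows "D \<ge> 1/(2 * sqrt 3) * min (1/K) (1/sqrt S) * eps^2"
proof -
  define mu where "mu = min (1/K) (1/sqrt S)"
  have S: "S > 0" using s by simp
  have mu: "mu > 0" using K S by (simp add: mu_def)
  have muK: "mu * K \<le> 1" using K by (simp add: mu_def min_def field_simps)
  have mu2: "mu^2 \<le> 1/S"
  proof -
    have "mu \<le> 1/sqrt S" by (simp add: mu_def)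
    hence "mu^2 \<le> (1/sqrt S)^2" using mu by (intro power_mono) auto
    thus ?thesis using S by (simp add: power_divide)
  qed
  have smu: "s * mu^2 \<le> 1"
  proof -
    have "s * mu^2 \<le> S * (1/S)" using mu2 s by (intro mult_mono) auto
    thus ?thesis using S by simp
  qed
  define t where "t = mu * eps / 2"
  have t: "t \<ge> 0" using mu e by (simp add: t_def)
  have D1: "D \<ge> t*g - t^2/2*K - s/3*t^3" using D t by blast
  have a1: "t * g \<ge> mu * eps^2 / 2"
  proof -
    have "t * g \<ge> t * eps" using t e by (intro mult_left_mono) auto
    thus ?thesis by (simp add: t_def power2_eq_square)
  qed
  have a2: "t^2/2*K \<le> mu * eps^2 / 8"
  proof -
    have "t^2/2*K = (mu*K) * (mu * eps^2 / 8)" by (simp add: t_def power2_eq_square)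
    also have "\<dots> \<le> 1 * (mu * eps^2 / 8)" using muK mu by (intro mult_right_mono) auto
    finally show ?thesis by simp
  qed
  have a3: "s/3*t^3 \<le> mu * eps^2 / 24"
  proof -
    have "s/3*t^3 = (s*mu^2) * (mu * eps^3 / 24)" by (simp add: t_def power3_eq_cube power2_eq_square)
    also have "\<dots> \<le> 1 * (mu * eps^3 / 24)" using smu mu e by (intro mult_right_mono) auto
    also have "eps^3 \<le> eps^2" using e by (simp add: power_decreasing)
    hence "1 * (mu * eps^3 / 24) \<le> mu * eps^2 / 24" using mu by simp
    finally show ?thesis .
  qed
  have "D \<ge> mu * eps^2 / 3" using D1 a1 a2 a3 by linarith
  moreover have "1/(2 * sqrt 3) \<le> 1/3"
  proof -
    have "3 \<le> 2 * sqrt 3" using real_sqrt_le_iff[of 9 12] by (simp add: real_sqrt_mult[of 4 3, simplified])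
    thus ?thesis by (simp add: field_simps)
  qed
  hence "1/(2 * sqrt 3) * (mu * eps^2) \<le> 1/3 * (mu * eps^2)" using mu by (intro mult_right_mono) auto
  ultimately show ?thesis by (simp add: mu_def mult.assoc)
qed

lemma grad_succ:
  fixes D g K s eps :: real
  assumes D: "\<forall>t\<ge>0. D \<ge> t*g - t^2/2*K - s/3*t^3"
    and e: "eps < g" "0 < eps" and K: "K > 0" and s: "0 < s"
  shows "D \<ge> (sqrt (K^2 + 4* s*eps) - K)^3 / (12 * s^2)"
proof -
  define v where "v = sqrt (K^2 + 4* s*eps) - K"
  have "sqrt (K^2 + 4* s*eps) \<ge> sqrt (K^2)" using s e by (intro real_sqrt_le_mono) auto
  hence v0: "v \<ge> 0" using K by (simp add: v_def)
  have sq: "(sqrt (K^2 + 4* s*eps))^2 = K^2 + 4* s*eps" using s e by simp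
  have vv: "v^2 + 2*K* v = 4* s*eps" using sq unfolding v_def by (simp add: power2_eq_square algebra_simps)
  define t where "t = v / (2* s)"
  have t: "t \<ge> 0" using v0 s by (simp add: t_def)
  have D1: "D \<ge> t*g - t^2/2*K - s/3*t^3" using D t by blast
  have "t * g \<ge> t * eps" using t e by (intro mult_left_mono) auto
  also have "t * eps = v * (4* s*eps) / (8* s^2)" using s by (simp add: t_def power2_eq_square field_simps)
  also have "\<dots> = v * (v^2 + 2*K* v) / (8 * s^2)" by (simp add: vv)
  also have "\<dots> = v^3/(8 * s^2) + K* v^2/(4 * s^2)" using s by (simp add: field_simps power2_eq_square power3_eq_cube)
  finally have a1: "t*g \<ge> v^3/(8* s^2) + K* v^2/(4* s^2)" .
  have a2: "t^2/2*K = K* v^2/(8* s^2)" using s by (simp add: t_def power2_eq_square field_simps)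
  have a3: "s/3*t^3 = v^3/(24* s^2)" using s by (simp add: t_def power3_eq_cube power2_eq_square field_simps)
  have "K* v^2/(8* s^2) \<ge> 0" using K s by simp
  hence "D \<ge> v^3/(12* s^2)" using D1 a1 a2 a3 by (simp add: field_simps)
  thus ?thesis by (simp add: v_def)
qed



lemma eig_num:
  fixes D q n c s :: real
  assumes D: "\<forall>b\<ge>0. D \<ge> b^2/2 * q - s/3 * b^3 * n^3" and n: "n > 0" and q: "q \<ge> c * n^2"
    and c: "c \<ge> 0" and s: "s > 0"
  shows "D \<ge> c^3 / (6 * s^2)"
proof -
  define b where "b = c / (s * n)"
  have b: "b \<ge> 0" using c s n by (simp add: b_def)
  have "b^2/2 * q \<ge> b^2/2 * (c * n^2)" using q by (intro mult_left_mono) auto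
  also have "b^2/2 * (c * n^2) = c^3/(2 * s^2)" using s n by (simp add: b_def field_simps power2_eq_square power3_eq_cube)
  finally have a1: "b^2/2 * q \<ge> c^3/(2 * s^2)" .
  have a2: "s/3 * b^3 * n^3 = c^3/(3 * s^2)" using s n by (simp add: b_def field_simps power2_eq_square power3_eq_cube)
  have "D \<ge> c^3/(2 * s^2) - c^3/(3 * s^2)" using D b a1 a2 by force
  thus ?thesis by (simp add: field_simps)
qed

lemma succ_num:
  fixes E dg dH r s :: real
  assumes E: "E \<le> dg * r + dH/2 * r^2 - s/12 * r^3" and dg: "dg \<le> 9 * dH^2 / (4 * s)"
    and s: "s > 0" and dH: "dH > 0" and r: "r \<ge> 0"
  shows "E \<le> 243/4 * dH^3 / s^2"
proof -
  have a0: "dg * r \<le> 9 * dH^2 / (4 * s) * r" using dg r by (intro mult_right_mono) auto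
  show ?thesis
  proof (cases "s * r \<le> 9 * dH")
    case True
    hence rr: "r \<le> 9 * dH / s" using s by (simp add: field_simps)
    have "9 * dH^2 / (4 * s) * r \<le> 9 * dH^2 / (4 * s) * (9 * dH / s)" using rr s by (intro mult_left_mono) auto
    also have "\<dots> = 81/4 * dH^3 / s^2" using s by (simp add: field_simps power2_eq_square power3_eq_cube)
    finally have a1: "dg * r \<le> 81/4 * dH^3 / s^2" using a0 by linarith
    have "r^2 \<le> (9 * dH / s)^2" using rr r by (intro power_mono) auto
    hence "dH/2 * r^2 \<le> dH/2 * (9 * dH / s)^2" using dH by (intro mult_left_mono) auto
    also have "\<dots> = 81/2 * dH^3 / s^2" using s by (simp add: field_simps power2_eq_square power3_eq_cube)
    finally have a2: "dH/2 * r^2 \<le> 81/2 * dH^3 / s^2" .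
    have a3: "s/12 * r^3 \<ge> 0" using s r by simp
    show ?thesis using E a1 a2 a3 by (simp add: field_simps)
  next
    case False
    hence d: "dH \<le> s * r / 9" by simp
    have "dH^2 \<le> (s * r / 9)^2" using d dH by (intro power_mono) auto
    hence "9 * dH^2 / (4 * s) * r \<le> 9 * (s * r / 9)^2 / (4 * s) * r" using s r
      by (intro mult_right_mono divide_right_mono) auto
    also have "\<dots> = s * r^3 / 36" using s by (simp add: field_simps power2_eq_square power3_eq_cube)
    finally have a1: "dg * r \<le> s * r^3 / 36" using a0 by linarith
    have "dH/2 * r^2 \<le> (s * r / 9)/2 * r^2" using d r by (intro mult_right_mono) auto
    also have "\<dots> = s * r^3 / 18" by (simp add: field_simps power2_eq_square power3_eq_cube)
    finally have a2: "dH/2 * r^2 \<le> s * r^3 / 18" .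
    have "E \<le> 0" using E a1 a2 by (simp add: field_simps)
    moreover have "243/4 * dH^3 / s^2 \<ge> 0" using dH by simp
    ultimately show ?thesis by linarith
  qed
qed

lemma dcomp_eig:
  fixes dH rho nu eH s :: real
  assumes d: "dH \<le> min (1/9) (2 * (1 - rho) / 9) * nu * eH" and dH: "dH > 0" and s: "s > 0"
    and pos: "nu > 0" "eH > 0" "rho < 1"
  shows "243/4 * dH^3 / s^2 \<le> (1 - rho) * ((nu * eH)^3 / (6 * s^2))"
proof -
  define c where "c = nu * eH"
  have d1: "dH \<le> c / 9" and d2: "dH \<le> 2 * (1 - rho) / 9 * c"
  proof -
    have c0: "c > 0" using pos by (simp add: c_def)
    have "dH \<le> min (1/9) (2 * (1 - rho) / 9) * c" using d by (simp add: c_def mult.assoc)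
    moreover have "min (1/9) (2 * (1 - rho) / 9) * c \<le> 1/9 * c" using c0 by (intro mult_right_mono) auto
    moreover have "min (1/9) (2 * (1 - rho) / 9) * c \<le> 2 * (1 - rho) / 9 * c" using c0 by (intro mult_right_mono min.cobounded2) auto
    ultimately show "dH \<le> c / 9" "dH \<le> 2 * (1 - rho) / 9 * c" by auto
  qed
  have c: "c > 0" using d1 dH by simp
  have "dH^2 \<le> (c/9)^2" using d1 dH by (intro power_mono) auto
  hence "dH^2 * dH \<le> (c/9)^2 * (2 * (1 - rho) / 9 * c)" using d2 dH c by (intro mult_mono) auto
  hence "dH^3 \<le> 2 * (1 - rho) * c^3 / 729" by (simp add: power2_eq_square power3_eq_cube field_simps)
  hence "243/4 * dH^3 / s^2 \<le> 243/4 * (2 * (1 - rho) * c^3 / 729) / s^2" using s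
    by (intro divide_right_mono mult_left_mono) auto
  also have "\<dots> = (1 - rho) * (c^3 / (6 * s^2))" using s by (simp add: field_simps)
  finally show ?thesis by (simp add: c_def)
qed

lemma dcomp_grad:
  fixes dH rho v s :: real
  assumes d: "dH \<le> min (1/18) ((1 - rho) / 9) * v" and dH: "dH > 0" and s: "s > 0"
    and pos: "v \<ge> 0" "rho < 1"
  shows "243/4 * dH^3 / s^2 \<le> (1 - rho) * (v^3 / (12 * s^2))"
proof -
  have d1: "dH \<le> v / 18" and d2: "dH \<le> (1 - rho) / 9 * v"
  proof -
    have "min (1/18) ((1 - rho) / 9) * v \<le> 1/18 * v" using pos by (intro mult_right_mono) auto
    moreover have "min (1/18) ((1 - rho) / 9) * v \<le> (1 - rho) / 9 * v" using pos by (intro mult_right_mono min.cobounded2) auto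
    ultimately show "dH \<le> v / 18" "dH \<le> (1 - rho) / 9 * v" using d by auto
  qed
  have v: "v > 0" using d1 dH by simp
  have "dH^2 \<le> (v/18)^2" using d1 dH by (intro power_mono) auto
  hence "dH^2 * dH \<le> (v/18)^2 * ((1 - rho) / 9 * v)" using d2 dH v by (intro mult_mono) auto
  hence "dH^3 \<le> (1 - rho) * v^3 / 2916" by (simp add: power2_eq_square power3_eq_cube field_simps)
  hence "243/4 * dH^3 / s^2 \<le> 243/4 * ((1 - rho) * v^3 / 2916) / s^2" using s
    by (intro divide_right_mono mult_left_mono) auto
  also have "\<dots> = (1 - rho) * (v^3 / (48 * s^2))" using s by (simp add: field_simps)
  also have "\<dots> \<le> (1 - rho) * (v^3 / (12 * s^2))"
  proof -
    have r: "1 - rho \<ge> 0" using pos by simp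
    have "v^3 / (48 * s^2) \<le> v^3 / (12 * s^2)" using v s by (intro divide_left_mono) auto
    thus ?thesis using r by (intro mult_left_mono) auto
  qed
  finally show ?thesis .
qed

theorem lemma3p8:
  fixes f :: "'m \<Rightarrow> real"
    and R :: "'m \<Rightarrow> 'v::euclidean_space \<Rightarrow> 'm"
    and x :: "nat \<Rightarrow> 'm" and sigma :: "nat \<Rightarrow> real"
    and G :: "nat \<Rightarrow> 'v" and H :: "nat \<Rightarrow> 'v \<Rightarrow> 'v"
    and eta :: "nat \<Rightarrow> 'v" and u :: "nat \<Rightarrow> 'v"
    and eps_g eps_H rho_TH gamma nu L_H K_H delta_g delta_H f_min :: real
    and N :: nat
  defines "m \<equiv> (\<lambda>k. cmodel (G k) (H k) (sigma k))"
  defines "rho \<equiv> (\<lambda>k. (f (x k) - f (R (x k) (eta k))) / (- m k (eta k)))"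
  assumes R0: "\<forall>y. R y 0 = y"
    and C2: "\<forall>y v. ((\<lambda>w. f (R y w)) has_derivative (\<lambda>h. grad_at (\<lambda>w. f (R y w)) v \<bullet> h)) (at v)
                 \<and> (grad_at (\<lambda>w. f (R y w)) has_derivative hess_at (\<lambda>w. f (R y w)) v) (at v)"
    and C2cont: "\<forall>y h. continuous_on UNIV (\<lambda>v. hess_at (\<lambda>w. f (R y w)) v h)"
    and params: "0 < eps_g" "eps_g < 1" "0 < eps_H" "eps_H < 1" "0 < rho_TH" "rho_TH < 1"
      "1 < gamma" "0 < nu" "nu < 1"
    and sigma0: "0 < sigma 0" "sigma 0 \<le> 2 * gamma * L_H"
    and Hsa: "\<forall>k\<le>N. self_adjoint (H k)"
    and nostop: "\<forall>k\<le>N. \<not> (norm (G k) \<le> eps_g \<and> lambda_min (H k) \<ge> - eps_H)"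
    and update: "\<forall>k\<le>N. (rho k \<ge> rho_TH \<longrightarrow> x (Suc k) = R (x k) (eta k) \<and> sigma (Suc k) = sigma k / gamma)
                      \<and> (rho k < rho_TH \<longrightarrow> x (Suc k) = x k \<and> sigma (Suc k) = gamma * sigma k)"
    and eig: "\<forall>k\<le>N. lambda_min (H k) < 0 \<longrightarrow>
                u k \<bullet> H k (u k) \<le> nu * lambda_min (H k) * norm (u k) ^ 2
              \<and> nu * lambda_min (H k) * norm (u k) ^ 2 < 0 \<and> G k \<bullet> u k \<le> 0"
    and A1: "L_H > 0" "\<forall>k\<le>N. \<bar>f (R (x k) (eta k)) - f (x k) - rgrad f R (x k) \<bullet> eta k
               - 1/2 * (rhess f R (x k) (eta k) \<bullet> eta k)\<bar> \<le> 1/2 * L_H * norm (eta k) ^ 3"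
    and A2: "K_H > 0" "\<forall>k\<le>N. \<forall>v. norm v \<le> 1 \<longrightarrow> v \<bullet> H k v \<le> K_H"
    and A3: "0 < delta_g" "delta_g < 1" "0 < delta_H" "delta_H < 1"
      "\<forall>k\<le>N. norm (G k - rgrad f R (x k)) \<le> delta_g"
      "\<forall>k\<le>N. norm (H k (eta k) - rhess f R (x k) (eta k)) \<le> delta_H * norm (eta k)"
    and A4C: "\<forall>k\<le>N. \<forall>a\<ge>0. (\<forall>b\<ge>0. m k (- (a *\<^sub>R G k)) \<le> m k (- (b *\<^sub>R G k)))
                 \<longrightarrow> - m k (eta k) \<ge> - m k (- (a *\<^sub>R G k))"
    and A4E: "\<forall>k\<le>N. lambda_min (H k) < 0 \<longrightarrow> (\<forall>a\<ge>0. (\<forall>b\<ge>0. m k (a *\<^sub>R u k) \<le> m k (b *\<^sub>R u k))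
                 \<longrightarrow> - m k (eta k) \<ge> - m k (a *\<^sub>R u k))"
    and dg: "\<forall>k\<le>N. delta_g \<le> 9 * delta_H ^ 2 / (4 * sigma k)"
    and dH: "\<forall>k\<le>N. delta_H \<le> min (min (1/18) ((1 - rho_TH) / 9) * (sqrt (K_H ^ 2 + 4 * sigma k * eps_g) - K_H))
                                   (min (1/9) (2 * (1 - rho_TH) / 9) * nu * eps_H)"
    and fmin: "\<exists>y. f y = f_min" "\<forall>y. f_min \<le> f y"
  shows "real (card {k. k \<le> N \<and> rho k \<ge> rho_TH}) \<le>
     (f (x 0) - f_min) / (rho_TH * min (nu ^ 3 / (24 * gamma ^ 2 * L_H ^ 2))
                                        (1 / (2 * sqrt 3) * min (1 / K_H) (1 / sqrt (2 * gamma * L_H))))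
       * max (1 / eps_g ^ 2) (1 / eps_H ^ 3) + 1"
proof -
  define D where "D = (\<lambda>k. - m k (eta k))"
  have lin: "linear (H k)" if "k \<le> N" for k using Hsa that unfolding self_adjoint_def by auto
  have mk: "m k v = cmodel (G k) (H k) (sigma k) v" for k v unfolding m_def by simp
  have Eb: "f (R (x k) (eta k)) - f (x k) + D k \<le> delta_g * norm (eta k) + delta_H/2 * norm (eta k)^2
              + (L_H/2 - sigma k/3) * norm (eta k)^3" if k: "k \<le> N" for k
  proof -
    define g where "g = rgrad f R (x k)"
    define hv where "hv = rhess f R (x k) (eta k)"
    define e where "e = eta k"
    have a1: "f (R (x k) e) - f (x k) - g \<bullet> e - 1/2 * (hv \<bullet> e) \<le> 1/2 * L_H * norm e ^ 3"
      using A1(2) k unfolding g_def hv_def e_def by (blast dest: abs_le_D1)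
    have "\<bar>(g - G k) \<bullet> e\<bar> \<le> norm (g - G k) * norm e" by (rule Cauchy_Schwarz_ineq2)
    also have "norm (g - G k) = norm (G k - g)" by (rule norm_minus_commute)
    also have "norm (G k - g) * norm e \<le> delta_g * norm e" using A3(5) k unfolding g_def by (intro mult_right_mono) auto
    finally have a2: "(g - G k) \<bullet> e \<le> delta_g * norm e" by linarith
    have "\<bar>(hv - H k e) \<bullet> e\<bar> \<le> norm (hv - H k e) * norm e" by (rule Cauchy_Schwarz_ineq2)
    also have "norm (hv - H k e) = norm (H k e - hv)" by (rule norm_minus_commute)
    also have "norm (H k e - hv) * norm e \<le> delta_H * norm e * norm e" using A3(6) k unfolding hv_def e_def by (intro mult_right_mono) auto
    finally have a3: "(hv - H k e) \<bullet> e \<le> delta_H * norm e ^ 2" by (simp add: power2_eq_square mult.assoc)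
    have DD: "D k = - (G k \<bullet> e + 1/2 * (H k e \<bullet> e) + 1/3 * sigma k * norm e ^ 3)"
      unfolding D_def mk cmodel_def e_def by simp
    have "f (R (x k) (eta k)) - f (x k) + D k = (f (R (x k) e) - f (x k) - g \<bullet> e - 1/2 * (hv \<bullet> e))
          + (g - G k) \<bullet> e + 1/2 * ((hv - H k e) \<bullet> e) - sigma k / 3 * norm e ^ 3"
      unfolding DD e_def by (simp add: inner_diff_left algebra_simps)
    also have "\<dots> \<le> 1/2 * L_H * norm e ^ 3 + delta_g * norm e + 1/2 * (delta_H * norm e ^ 2) - sigma k / 3 * norm e ^ 3"
      using a1 a2 a3 by linarith
    finally show ?thesis by (simp add: e_def algebra_simps)
  qed
  have Dcases: "(eps_g < norm (G k) \<and> (\<forall>t\<ge>0. D k \<ge> t * norm (G k) - t^2/2 * K_H - sigma k/3 * t^3))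
      \<or> D k \<ge> (nu * eps_H)^3 / (6 * sigma k ^ 2)" if k: "k \<le> N" and s: "0 < sigma k" for k
  proof (cases "eps_g < norm (G k)")
    case True
    have G0: "G k \<noteq> 0" using True params by auto
    have "\<forall>t\<ge>0. - cmodel (G k) (H k) (sigma k) (eta k) \<ge> t * norm (G k) - t^2/2 * K_H - sigma k/3 * t^3"
      by (rule cauchy_bound[OF lin[OF k] _ s G0]) (use A2(2) A4C k in \<open>auto simp: mk\<close>)
    thus ?thesis using True unfolding D_def mk by auto
  next
    case False
    hence lam: "lambda_min (H k) < - eps_H" using nostop k by force
    hence lam0: "lambda_min (H k) < 0" using params by linarith
    have e1: "u k \<bullet> H k (u k) \<le> nu * lambda_min (H k) * norm (u k) ^ 2"
      and e2: "nu * lambda_min (H k) * norm (u k) ^ 2 < 0" and e3: "G k \<bullet> u k \<le> 0"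
      using eig k lam0 by auto
    have u0: "u k \<noteq> 0" using e2 by auto
    have "\<forall>b\<ge>0. - cmodel (G k) (H k) (sigma k) (eta k) \<ge> b^2/2 * (-(H k (u k) \<bullet> u k)) - sigma k/3 * b^3 * norm (u k)^3"
      by (rule eigen_bound[OF lin[OF k] s u0 e3]) (use A4E k lam0 in \<open>auto simp: mk\<close>)
    hence Db: "\<forall>b\<ge>0. D k \<ge> b^2/2 * (-(H k (u k) \<bullet> u k)) - sigma k/3 * b^3 * norm (u k)^3"
      unfolding D_def mk by simp
    have n: "norm (u k) > 0" using u0 by simp
    have "nu * eps_H * norm (u k)^2 \<le> nu * (- lambda_min (H k)) * norm (u k)^2"
      using lam params by (intro mult_right_mono mult_left_mono) auto
    also have "\<dots> \<le> - (H k (u k) \<bullet> u k)" using e1 by (simp add: inner_commute)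
    finally have q: "- (H k (u k) \<bullet> u k) \<ge> nu * eps_H * norm (u k)^2" .
    have "D k \<ge> (nu * eps_H)^3 / (6 * sigma k ^ 2)"
      by (rule eig_num[OF Db n q]) (use params s in auto)
    thus ?thesis by simp
  qed
  have Dpos: "D k > 0" if k: "k \<le> N" and s: "0 < sigma k" for k
  proof -
    from Dcases[OF k s] show ?thesis
    proof
      assume a: "eps_g < norm (G k) \<and> (\<forall>t\<ge>0. D k \<ge> t * norm (G k) - t^2/2 * K_H - sigma k/3 * t^3)"
      have "D k \<ge> 1/(2 * sqrt 3) * min (1/K_H) (1/sqrt (sigma k)) * eps_g^2"
        by (rule grad_count[of "norm (G k)" K_H "sigma k" "D k"]) (use a params A2 s in auto)
      moreover have "1/(2 * sqrt 3) * min (1/K_H) (1/sqrt (sigma k)) * eps_g^2 > 0" using A2 s params by simp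
      ultimately show ?thesis by linarith
    next
      assume "D k \<ge> (nu * eps_H)^3 / (6 * sigma k ^ 2)"
      moreover have "(nu * eps_H)^3 / (6 * sigma k ^ 2) > 0" using params s by simp
      ultimately show ?thesis by linarith
    qed
  qed
  have succ: "rho_TH \<le> rho k" if k: "k \<le> N" and s: "0 < sigma k" and sL: "2 * L_H \<le> sigma k" for k
  proof -
    define E where "E = f (R (x k) (eta k)) - f (x k) + D k"
    have "L_H/2 - sigma k/3 \<le> - (sigma k / 12)" using sL by simp
    hence "(L_H/2 - sigma k/3) * norm (eta k)^3 \<le> - (sigma k / 12) * norm (eta k)^3"
      by (intro mult_right_mono) auto
    hence E1: "E \<le> delta_g * norm (eta k) + delta_H/2 * norm (eta k)^2 - sigma k/12 * norm (eta k)^3"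
      using Eb[OF k] unfolding E_def by simp
    have E2: "E \<le> 243/4 * delta_H^3 / sigma k ^ 2"
      by (rule succ_num[OF E1]) (use dg k s A3 in auto)
    have E3: "E \<le> (1 - rho_TH) * D k"
    proof -
      from Dcases[OF k s] show ?thesis
      proof
        assume a: "eps_g < norm (G k) \<and> (\<forall>t\<ge>0. D k \<ge> t * norm (G k) - t^2/2 * K_H - sigma k/3 * t^3)"
        define v where "v = sqrt (K_H^2 + 4 * sigma k * eps_g) - K_H"
        have Dv: "D k \<ge> v^3 / (12 * sigma k ^ 2)" unfolding v_def
          by (rule grad_succ[of "norm (G k)"]) (use a params A2 s in auto)
        have "sqrt (K_H^2 + 4 * sigma k * eps_g) \<ge> sqrt (K_H^2)" using s params by (intro real_sqrt_le_mono) auto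
        hence v0: "v \<ge> 0" using A2 by (simp add: v_def)
        have dv: "delta_H \<le> min (1/18) ((1 - rho_TH) / 9) * v" using dH k unfolding v_def by auto
        have "243/4 * delta_H^3 / sigma k ^ 2 \<le> (1 - rho_TH) * (v^3 / (12 * sigma k ^ 2))"
          by (rule dcomp_grad[OF dv]) (use A3 s v0 params in auto)
        also have "\<dots> \<le> (1 - rho_TH) * D k" using Dv params by (intro mult_left_mono) auto
        finally show ?thesis using E2 by linarith
      next
        assume a: "D k \<ge> (nu * eps_H)^3 / (6 * sigma k ^ 2)"
        have dv: "delta_H \<le> min (1/9) (2 * (1 - rho_TH) / 9) * nu * eps_H" using dH k by auto
        have "243/4 * delta_H^3 / sigma k ^ 2 \<le> (1 - rho_TH) * ((nu * eps_H)^3 / (6 * sigma k ^ 2))"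
          by (rule dcomp_eig[OF dv]) (use A3 s params in auto)
        also have "\<dots> \<le> (1 - rho_TH) * D k" using a params by (intro mult_left_mono) auto
        finally show ?thesis using E2 by linarith
      qed
    qed
    have num: "f (x k) - f (R (x k) (eta k)) \<ge> rho_TH * D k" using E3 unfolding E_def by (simp add: algebra_simps)
    have "rho k = (f (x k) - f (R (x k) (eta k))) / D k" unfolding rho_def D_def by simp
    thus ?thesis using num Dpos[OF k s] by (simp add: pos_le_divide_eq mult.commute)
  qed
  have sig: "0 < sigma k \<and> sigma k \<le> 2 * gamma * L_H" if "k \<le> N" for k
    using that
  proof (induction k)
    case 0 thus ?case using sigma0 by simp
  next
    case (Suc k)
    hence k: "k \<le> N" and IH: "0 < sigma k" "sigma k \<le> 2 * gamma * L_H" by auto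
    show ?case
    proof (cases "rho_TH \<le> rho k")
      case True
      hence eq: "sigma (Suc k) = sigma k / gamma" using update k by auto
      have "sigma k / gamma \<le> sigma k" using IH params by (simp add: divide_le_eq)
      thus ?thesis using eq IH params by simp
    next
      case False
      hence eq: "sigma (Suc k) = gamma * sigma k" using update k by auto
      have "sigma k < 2 * L_H" using succ[OF k IH(1)] False by linarith
      hence "gamma * sigma k \<le> gamma * (2 * L_H)" using params by (intro mult_left_mono) auto
      thus ?thesis using eq IH params by simp
    qed
  qed
  define kap where "kap = min (nu ^ 3 / (24 * gamma ^ 2 * L_H ^ 2))
                                (1 / (2 * sqrt 3) * min (1 / K_H) (1 / sqrt (2 * gamma * L_H)))"
  define M where "M = max (1 / eps_g ^ 2) (1 / eps_H ^ 3)"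
  have kap0: "kap > 0" using params A1(1) A2(1) by (simp add: kap_def)
  have M0: "M > 0" using params by (simp add: M_def max_def)
  have DM: "D k \<ge> kap / M" if k: "k \<le> N" for k
  proof -
    have s: "0 < sigma k" "sigma k \<le> 2 * gamma * L_H" using sig[OF k] by auto
    from Dcases[OF k s(1)] show ?thesis
    proof
      assume a: "eps_g < norm (G k) \<and> (\<forall>t\<ge>0. D k \<ge> t * norm (G k) - t^2/2 * K_H - sigma k/3 * t^3)"
      have "D k \<ge> 1/(2 * sqrt 3) * min (1/K_H) (1/sqrt (2 * gamma * L_H)) * eps_g^2"
        by (rule grad_count[of "norm (G k)" K_H "sigma k"]) (use a params A2 s in auto)
      moreover have "kap * eps_g^2 \<le> 1/(2 * sqrt 3) * min (1/K_H) (1/sqrt (2 * gamma * L_H)) * eps_g^2"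
        unfolding kap_def by (intro mult_right_mono) auto
      moreover have "kap / M \<le> kap * eps_g^2"
      proof -
        have "1 / eps_g^2 \<le> M" by (simp add: M_def)
        hence "1 / M \<le> eps_g^2" using params M0 by (simp add: field_simps)
        thus ?thesis using kap0 by (simp add: divide_inverse mult_left_mono)
      qed
      ultimately show ?thesis by linarith
    next
      assume a: "D k \<ge> (nu * eps_H)^3 / (6 * sigma k ^ 2)"
      have "sigma k ^ 2 \<le> (2 * gamma * L_H)^2" using s by (intro power_mono) auto
      hence "6 * sigma k ^ 2 \<le> 24 * gamma ^ 2 * L_H ^ 2" by (simp add: power_mult_distrib mult_ac)
      hence "(nu * eps_H)^3 / (24 * gamma ^ 2 * L_H ^ 2) \<le> (nu * eps_H)^3 / (6 * sigma k ^ 2)"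
        using s params A1(1) by (intro divide_left_mono) auto
      moreover have "(nu * eps_H)^3 / (24 * gamma ^ 2 * L_H ^ 2) = nu ^ 3 / (24 * gamma ^ 2 * L_H ^ 2) * eps_H^3"
        by (simp add: power_mult_distrib)
      moreover have "kap * eps_H^3 \<le> nu ^ 3 / (24 * gamma ^ 2 * L_H ^ 2) * eps_H^3"
        unfolding kap_def using params by (intro mult_right_mono) auto
      moreover have "kap / M \<le> kap * eps_H^3"
      proof -
        have "1 / eps_H^3 \<le> M" by (simp add: M_def)
        hence "1 / M \<le> eps_H^3" using params M0 by (simp add: field_simps)
        thus ?thesis using kap0 by (simp add: divide_inverse mult_left_mono)
      qed
      ultimately show ?thesis using a by linarith
    qed
  qed
  define S where "S = {k. k \<le> N \<and> rho k \<ge> rho_TH}"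
  define c where "c = rho_TH * kap / M"
  have dec: "f (x k) - f (x (Suc k)) \<ge> c" if k: "k \<in> S" for k
  proof -
    have k1: "k \<le> N" and r: "rho_TH \<le> rho k" using k by (auto simp: S_def)
    have xs: "x (Suc k) = R (x k) (eta k)" using update k1 r by auto
    have Dp: "D k > 0" using Dpos[OF k1] sig[OF k1] by auto
    have "rho k = (f (x k) - f (R (x k) (eta k))) / D k" unfolding rho_def D_def by simp
    hence "rho_TH * D k \<le> f (x k) - f (R (x k) (eta k))" using r Dp by (simp add: pos_le_divide_eq mult.commute)
    moreover have "rho_TH * (kap / M) \<le> rho_TH * D k" using DM[OF k1] params by (intro mult_left_mono) auto
    ultimately show ?thesis using xs by (simp add: c_def)
  qed
  have nodec: "f (x (Suc k)) = f (x k)" if k: "k \<le> N" "k \<notin> S" for k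
    using update k by (auto simp: S_def)
  have fin: "finite S" unfolding S_def by simp
  have Ssub: "S \<subseteq> {..<Suc N}" unfolding S_def by auto
  have "f (x 0) - f (x (Suc N)) = (\<Sum>k<Suc N. f (x k) - f (x (Suc k)))"
    using sum_lessThan_telescope'[of "\<lambda>k. f (x k)" "Suc N"] by simp
  also have "\<dots> = (\<Sum>k\<in>S. f (x k) - f (x (Suc k)))"
    by (rule sum.mono_neutral_right) (use Ssub nodec in auto)
  also have "\<dots> \<ge> (\<Sum>k\<in>S. c)" by (rule sum_mono) (use dec in auto)
  finally have "real (card S) * c \<le> f (x 0) - f (x (Suc N))" by simp
  also have "\<dots> \<le> f (x 0) - f_min" using fmin(2) by simp
  finally have cs: "real (card S) * c \<le> f (x 0) - f_min" .
  have c0: "c > 0" using params kap0 M0 by (simp add: c_def)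
  have "real (card S) \<le> (f (x 0) - f_min) / c" using cs c0 by (simp add: pos_le_divide_eq)
  also have "(f (x 0) - f_min) / c = (f (x 0) - f_min) / (rho_TH * kap) * M"
    unfolding c_def using M0 by simp
  finally show ?thesis unfolding S_def kap_def M_def by linarith
qed

end
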